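(* Let $1<n\leq m$ and let $v\in Z_{n,m}$ with $I_c(v)\subseteq[1,m]$ and $\sum_{i\in I_c(v)}v_i=0$. Then $$d(v,0)\leq\sum_{i=1}^{p_l(v)}i+\sum_{i=1}^{m-p_r(v)}i+\lfloor\tfrac{\gamma}{2}\rfloor\lceil\tfrac{\gamma}{2}\rceil,$$ where $\gamma=|I_c(v)|$.
   Context: Elements of $\mathbb{Z}_n$ are identified with representatives in $\{0,\dots,n-1\}$. $Z_{n,m}$ has vertices $u=(u_0,\dots,u_{m+1})\in\mathbb{Z}_n\times\{-1,0,1\}^m\times\mathbb{Z}_n$ with $\sum u_i\equiv0\pmod n$; $u,v$ adjacent if there is $0\leq i\leq m$ with $u_j=v_j$ for $j\notin\{i,i+1\}$ and either ($u_i=v_i+1$, $u_{i+1}=v_{i+1}-1$) or ($u_i=v_i-1$, $u_{i+1}=v_{i+1}+1$), arithmetic in coordinates $0,m+1$ in $\mathbb{Z}_n$. $d$ is graph distance, $0$ the all-zero vertex. $\operatorname{Piv}(v)$ is the set of $-1\le p\le m+1$ with $n\mid\sum_{i=0}^pv_i$ (empty sum $0$). $p_l(v)=\max\{p\in\operatorname{Piv}(v):p<\frac m2\}$, $p_r(v)=\min\{p\in\operatorname{Piv}(v):p\ge\frac m2\}$, $I_c(v)=\{p_l(v)+1,\dots,p_r(v)\}$. *)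

theory Defs
  imports Complex_Main "HOL-Library.Extended_Nat"
begin

text \<open>Vertices of Z_{n,m} are represented as functions nat => int, where
  coordinate i (0 <= i <= m+1) is u_i and all coordinates beyond m+1 are 0.\<close>

definition zvert :: "nat \<Rightarrow> nat \<Rightarrow> (nat \<Rightarrow> int) \<Rightarrow> bool" where
  "zvert n m u \<longleftrightarrow>
     u 0 \<in> {0..int n - 1} \<and> u (m+1) \<in> {0..int n - 1}
     \<and> (\<forall>i\<in>{1..m}. u i \<in> {-1, 0, 1})
     \<and> (\<forall>i>m+1. u i = 0)
     \<and> int n dvd (\<Sum>i\<le>m+1. u i)"

definition zcoord_eq :: "nat \<Rightarrow> nat \<Rightarrow> nat \<Rightarrow> int \<Rightarrow> int \<Rightarrow> bool" where
  "zcoord_eq n m k a b \<longleftrightarrow> (if k = 0 \<or> k = m+1 then a mod int n = b mod int n else a = b)"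

definition zadj :: "nat \<Rightarrow> nat \<Rightarrow> (nat \<Rightarrow> int) \<Rightarrow> (nat \<Rightarrow> int) \<Rightarrow> bool" where
  "zadj n m u v \<longleftrightarrow> zvert n m u \<and> zvert n m v \<and>
     (\<exists>i\<le>m. (\<forall>j\<le>m+1. j \<noteq> i \<and> j \<noteq> i+1 \<longrightarrow> u j = v j) \<and>
        ((zcoord_eq n m i (u i) (v i + 1) \<and> zcoord_eq n m (i+1) (u (i+1)) (v (i+1) - 1)) \<or>
         (zcoord_eq n m i (u i) (v i - 1) \<and> zcoord_eq n m (i+1) (u (i+1)) (v (i+1) + 1))))"

text \<open>Graph distance (infinity if no path).\<close>
definition zdist :: "nat \<Rightarrow> nat \<Rightarrow> (nat \<Rightarrow> int) \<Rightarrow> (nat \<Rightarrow> int) \<Rightarrow> enat" where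
  "zdist n m u v = (INF k\<in>{k. (zadj n m ^^ k) u v}. enat k)"

text \<open>Partial sums: psum v p = sum_{i=0}^p v_i (empty sum for p = -1).\<close>
definition psum :: "(nat \<Rightarrow> int) \<Rightarrow> int \<Rightarrow> int" where
  "psum v p = (\<Sum>i\<in>{0..<nat (p+1)}. v i)"

definition Piv :: "nat \<Rightarrow> nat \<Rightarrow> (nat \<Rightarrow> int) \<Rightarrow> int set" where
  "Piv n m v = {p. -1 \<le> p \<and> p \<le> int m + 1 \<and> int n dvd psum v p}"

definition p_l :: "nat \<Rightarrow> nat \<Rightarrow> (nat \<Rightarrow> int) \<Rightarrow> int" where
  "p_l n m v = Max {p\<in>Piv n m v. real_of_int p < real m / 2}"

definition p_r :: "nat \<Rightarrow> nat \<Rightarrow> (nat \<Rightarrow> int) \<Rightarrow> int" where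
  "p_r n m v = Min {p\<in>Piv n m v. real_of_int p \<ge> real m / 2}"

definition I_c :: "nat \<Rightarrow> nat \<Rightarrow> (nat \<Rightarrow> int) \<Rightarrow> int set" where
  "I_c n m v = {p_l n m v + 1 .. p_r n m v}"

end

theory Submission
  imports Defs
begin


definition vert :: "nat \<Rightarrow> nat \<Rightarrow> (nat \<Rightarrow> int) \<Rightarrow> nat \<Rightarrow> int" where
  "vert n m w i = (if i = 0 then w 0 mod int n else if i \<le> m then w i - w (i-1)
     else if i = m+1 then (- w m) mod int n else 0)"

definition lip :: "nat \<Rightarrow> (nat \<Rightarrow> int) \<Rightarrow> bool" where
  "lip m w \<longleftrightarrow> (\<forall>i\<in>{1..m}. \<bar>w i - w (i-1)\<bar> \<le> 1)"

lemma tele: "k \<le> m \<Longrightarrow> (\<Sum>i\<le>k. vert n m w i) = w 0 mod int n + w k - w 0"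
proof (induction k)
  case 0 then show ?case by (simp add: vert_def)
next
  case (Suc k) then show ?case by (simp add: vert_def)
qed

lemma vert_zvert:
  assumes "1 < n" "1 \<le> m" "lip m w"
  shows "zvert n m (vert n m w)"
proof -
  have s: "(\<Sum>i\<le>m+1. vert n m w i) = w 0 mod int n + w m - w 0 + (- w m) mod int n"
    using tele[of m m n w] by (simp add: vert_def)
  have d1: "int n dvd (w 0 mod int n - w 0)"
    using minus_mult_div_eq_mod[of "w 0" "int n", symmetric] by simp
  have d2: "int n dvd (w m + (- w m) mod int n)"
    using minus_mult_div_eq_mod[of "- w m" "int n", symmetric] by simp
  have "int n dvd (\<Sum>i\<le>m+1. vert n m w i)"
    unfolding s using dvd_add[OF d1 d2] by (simp add: algebra_simps)
  moreover have "\<forall>i\<in>{1..m}. vert n m w i \<in> {-1, 0, 1}"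
  proof
    fix i assume i: "i \<in> {1..m}"
    then have "\<bar>w i - w (i-1)\<bar> \<le> 1" using assms(3) lip_def by blast
    then show "vert n m w i \<in> {-1, 0, 1}" using i by (auto simp: vert_def)
  qed
  moreover have "vert n m w 0 \<in> {0..int n - 1}" "vert n m w (m+1) \<in> {0..int n - 1}"
    using assms(1) by (auto simp: vert_def)
  moreover have "\<forall>i>m+1. vert n m w i = 0" by (simp add: vert_def)
  ultimately show ?thesis unfolding zvert_def by blast
qed

lemma step_pos:
  assumes "1 < n" "lip m w" "i \<le> m" "w i > 0" "\<forall>j\<le>m. \<bar>w j\<bar> \<le> \<bar>w i\<bar>" "1 \<le> m"
  defines "w' \<equiv> w(i := w i - 1)"
  shows "lip m w'" "zadj n m (vert n m w) (vert n m w')"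
proof -
  have L: "\<And>j. j \<in> {1..m} \<Longrightarrow> \<bar>w j - w (j-1)\<bar> \<le> 1" using assms(2) lip_def by blast
  show lw: "lip m w'" unfolding lip_def
  proof
    fix j assume j: "j \<in> {1..m}"
    have a: "\<bar>w j - w (j-1)\<bar> \<le> 1" using L j .
    have b: "\<bar>w j\<bar> \<le> w i" "\<bar>w (j-1)\<bar> \<le> w i" using assms(5,4) j by auto
    show "\<bar>w' j - w' (j-1)\<bar> \<le> 1"
      using a b j assms(4) unfolding w'_def by (cases "j = i"; cases "j - 1 = i"; auto)
  qed
  have V: "zvert n m (vert n m w)" "zvert n m (vert n m w')"
    using vert_zvert[OF assms(1) assms(6)] assms(2) lw by auto
  have e1: "zcoord_eq n m i (vert n m w i) (vert n m w' i + 1)"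
  proof (cases "i = 0")
    case True then show ?thesis using assms(3)
      by (simp add: zcoord_eq_def vert_def w'_def mod_simps)
  next
    case False then show ?thesis using assms(3)
      by (simp add: zcoord_eq_def vert_def w'_def)
  qed
  have e2: "zcoord_eq n m (i+1) (vert n m w (i+1)) (vert n m w' (i+1) - 1)"
  proof (cases "i = m")
    case True then show ?thesis
      by (simp add: zcoord_eq_def vert_def w'_def mod_simps)
  next
    case False then show ?thesis using assms(3)
      by (simp add: zcoord_eq_def vert_def w'_def)
  qed
  have e3: "\<forall>j\<le>m+1. j \<noteq> i \<and> j \<noteq> i+1 \<longrightarrow> vert n m w j = vert n m w' j"
    by (auto simp: vert_def w'_def)
  show "zadj n m (vert n m w) (vert n m w')"
    unfolding zadj_def using V e1 e2 e3 assms(3) by blast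
qed

lemma step_neg:
  assumes "1 < n" "lip m w" "i \<le> m" "w i < 0" "\<forall>j\<le>m. \<bar>w j\<bar> \<le> \<bar>w i\<bar>" "1 \<le> m"
  defines "w' \<equiv> w(i := w i + 1)"
  shows "lip m w'" "zadj n m (vert n m w) (vert n m w')"
proof -
  have L: "\<And>j. j \<in> {1..m} \<Longrightarrow> \<bar>w j - w (j-1)\<bar> \<le> 1" using assms(2) lip_def by blast
  show lw: "lip m w'" unfolding lip_def
  proof
    fix j assume j: "j \<in> {1..m}"
    have a: "\<bar>w j - w (j-1)\<bar> \<le> 1" using L j .
    have b: "\<bar>w j\<bar> \<le> - w i" "\<bar>w (j-1)\<bar> \<le> - w i" using assms(5,4) j by auto
    show "\<bar>w' j - w' (j-1)\<bar> \<le> 1"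
      using a b j assms(4) unfolding w'_def by (cases "j = i"; cases "j - 1 = i"; auto)
  qed
  have V: "zvert n m (vert n m w)" "zvert n m (vert n m w')"
    using vert_zvert[OF assms(1) assms(6)] assms(2) lw by auto
  have e1: "zcoord_eq n m i (vert n m w i) (vert n m w' i - 1)"
  proof (cases "i = 0")
    case True then show ?thesis using assms(3)
      by (simp add: zcoord_eq_def vert_def w'_def mod_simps)
  next
    case False then show ?thesis using assms(3)
      by (simp add: zcoord_eq_def vert_def w'_def)
  qed
  have e2: "zcoord_eq n m (i+1) (vert n m w (i+1)) (vert n m w' (i+1) + 1)"
  proof (cases "i = m")
    case True then show ?thesis
      by (simp add: zcoord_eq_def vert_def w'_def mod_simps)
  next
    case False then show ?thesis using assms(3)
      by (simp add: zcoord_eq_def vert_def w'_def)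
  qed
  have e3: "\<forall>j\<le>m+1. j \<noteq> i \<and> j \<noteq> i+1 \<longrightarrow> vert n m w j = vert n m w' j"
    by (auto simp: vert_def w'_def)
  show "zadj n m (vert n m w) (vert n m w')"
    unfolding zadj_def using V e1 e2 e3 assms(3) by blast
qed

lemma path:
  assumes "1 < n" "1 \<le> m"
  shows "lip m w \<Longrightarrow> (\<Sum>j\<le>m. \<bar>w j\<bar>) = int N \<Longrightarrow> \<exists>k\<le>N. (zadj n m ^^ k) (vert n m w) (\<lambda>_. 0)"
proof (induction N arbitrary: w rule: less_induct)
  case (less N)
  define M where "M = Max ((\<lambda>j. \<bar>w j\<bar>) ` {..m})"
  have fin: "finite ((\<lambda>j. \<bar>w j\<bar>) ` {..m})" "(\<lambda>j. \<bar>w j\<bar>) ` {..m} \<noteq> {}" by auto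
  have "M \<in> (\<lambda>j. \<bar>w j\<bar>) ` {..m}" using Max_in[OF fin] unfolding M_def .
  then obtain i where i0: "i \<in> {..m}" "M = \<bar>w i\<bar>" by (rule imageE)
  then have i: "i \<le> m" "\<bar>w i\<bar> = M" by simp_all
  have ge: "\<forall>j\<le>m. \<bar>w j\<bar> \<le> \<bar>w i\<bar>"
  proof (intro allI impI)
    fix j assume "j \<le> m"
    then have "\<bar>w j\<bar> \<in> (\<lambda>j. \<bar>w j\<bar>) ` {..m}" by (intro imageI) simp
    then show "\<bar>w j\<bar> \<le> \<bar>w i\<bar>" using Max_ge[OF fin(1)] i(2) unfolding M_def by simp
  qed
  show ?case
  proof (cases "w i = 0")
    case True
    then have z: "\<forall>j\<le>m. w j = 0" using ge by (metis abs_le_zero_iff abs_zero)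
    have "vert n m w = (\<lambda>_. 0)" by (rule ext) (use z in \<open>auto simp: vert_def\<close>)
    then show ?thesis by (intro exI[of _ 0]) simp
  next
    case False
    define s where "s = (if w i > 0 then 1 else -1::int)"
    define w' where "w' = w(i := w i - s)"
    have st: "lip m w' \<and> zadj n m (vert n m w) (vert n m w')"
    proof (cases "w i > 0")
      case True
      then show ?thesis using step_pos[OF assms(1) less.prems(1) i(1) True ge assms(2)]
        unfolding w'_def s_def by simp
    next
      case f: False
      then have "w i < 0" using False by simp
      then show ?thesis using step_neg[OF assms(1) less.prems(1) i(1) _ ge assms(2)] f
        unfolding w'_def s_def by simp
    qed
    have "(\<Sum>j\<le>m. \<bar>w j\<bar>) = \<bar>w i\<bar> + (\<Sum>j\<in>{..m} - {i}. \<bar>w j\<bar>)"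
      by (rule sum.remove) (use i(1) in auto)
    moreover have "(\<Sum>j\<le>m. \<bar>w' j\<bar>) = \<bar>w' i\<bar> + (\<Sum>j\<in>{..m} - {i}. \<bar>w' j\<bar>)"
      by (rule sum.remove) (use i(1) in auto)
    moreover have "(\<Sum>j\<in>{..m} - {i}. \<bar>w' j\<bar>) = (\<Sum>j\<in>{..m} - {i}. \<bar>w j\<bar>)"
      by (rule sum.cong) (auto simp: w'_def)
    moreover have "\<bar>w' i\<bar> + 1 = \<bar>w i\<bar>" using False by (auto simp: w'_def s_def)
    ultimately have sm: "(\<Sum>j\<le>m. \<bar>w' j\<bar>) + 1 = int N" using less.prems(2) by linarith
    then have N1: "N \<ge> 1" "(\<Sum>j\<le>m. \<bar>w' j\<bar>) = int (N - 1)"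
      using sum_nonneg[of "{..m}" "\<lambda>j. \<bar>w' j\<bar>"] by linarith+
    obtain k where k: "k \<le> N - 1" "(zadj n m ^^ k) (vert n m w') (\<lambda>_. 0)"
      using less.IH[of "N - 1" w'] N1 st by fastforce
    have "(zadj n m ^^ Suc k) (vert n m w) (\<lambda>_. 0)"
      by (rule relpowp_Suc_I2[of "zadj n m", OF conjunct2[OF st] k(2)])
    moreover have "Suc k \<le> N" using k(1) N1(1) by simp
    ultimately show ?thesis by blast
  qed
qed



lemma H1: "2 * (\<Sum>i\<in>{x..<x+k}. (c::int) - int i) = int k * (2*c - 2*int x - int k + 1)"
proof (induction k)
  case 0 then show ?case by simp
next
  case (Suc k)
  have "{x..<x + Suc k} = insert (x+k) {x..<x+k}" by auto
  then have "(\<Sum>i\<in>{x..<x+Suc k}. c - int i) = (c - int (x+k)) + (\<Sum>i\<in>{x..<x+k}. c - int i)"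
    by simp
  then show ?case using Suc.IH by (simp add: algebra_simps)
qed

lemma H2: "2 * (\<Sum>i\<in>{x..<x+k}. int i - (c::int)) = - int k * (2*c - 2*int x - int k + 1)"
proof -
  have "(\<Sum>i\<in>{x..<x+k}. int i - c) = - (\<Sum>i\<in>{x..<x+k}. c - int i)"
    by (simp add: sum_negf[symmetric])
  then show ?thesis using H1[where x=x and k=k and c=c] by simp
qed

lemma G: "2 * (\<Sum>i\<in>{1..int k}. i) = int k * (int k + 1)"
proof (induction k)
  case 0 then show ?case by simp
next
  case (Suc k)
  have "{1..int (Suc k)} = insert (1 + int k) {1..int k}"
    using atLeastAtMostPlus1_int_conv[of 1 "int k"] by (simp add: add.commute)
  then have "(\<Sum>i\<in>{1..int (Suc k)}. i) = (1 + int k) + (\<Sum>i\<in>{1..int k}. i)" by simp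
  then show ?case using Suc.IH by (simp add: algebra_simps)
qed

lemma lipdist:
  assumes "lip m w" "i \<le> j" "j \<le> m"
  shows "\<bar>w j - w i\<bar> \<le> int j - int i"
  using assms(2,3)
proof (induction j)
  case 0 then show ?case by simp
next
  case (Suc j)
  show ?case
  proof (cases "i = Suc j")
    case True then show ?thesis by simp
  next
    case False
    then have "i \<le> j" using Suc.prems by simp
    then have a: "\<bar>w j - w i\<bar> \<le> int j - int i" using Suc by simp
    have "\<bar>w (Suc j) - w j\<bar> \<le> 1" using assms(1) Suc.prems unfolding lip_def
      by (metis atLeastAtMost_iff diff_Suc_1 le_add1 plus_1_eq_Suc)
    then show ?thesis using a by linarith
  qed
qed

lemma floorceil:
  fixes g :: nat
  shows "\<lfloor>real g / 2\<rfloor> = int (g div 2)" "\<lceil>real g / 2\<rceil> = int (g - g div 2)"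
proof -
  show "\<lfloor>real g / 2\<rfloor> = int (g div 2)"
    using floor_divide_of_nat_eq[of g 2] by simp
  show "\<lceil>real g / 2\<rceil> = int (g - g div 2)"
  proof (rule ceiling_unique)
    show "real_of_int (int (g - g div 2)) - 1 < real g / 2"
      by (cases "even g") (auto elim!: evenE oddE simp: field_simps)
    show "real g / 2 \<le> real_of_int (int (g - g div 2))"
      by (cases "even g") (auto elim!: evenE oddE simp: field_simps)
  qed
qed



theorem lemma5p28:
  fixes n m :: nat and v :: "nat \<Rightarrow> int"
  assumes "1 < n" and "n \<le> m"
    and "zvert n m v"
    and "I_c n m v \<subseteq> {1..int m}"
    and "(\<Sum>i\<in>I_c n m v. v (nat i)) = 0"
  shows "zdist n m v (\<lambda>_. 0) \<le>
    enat (nat ((\<Sum>i\<in>{1..p_l n m v}. i) + (\<Sum>i\<in>{1..int m - p_r n m v}. i)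
      + \<lfloor>real (card (I_c n m v)) / 2\<rfloor> * \<lceil>real (card (I_c n m v)) / 2\<rceil>))"
proof -
  have m1: "1 \<le> m" using assms(1,2) by simp
  have zv: "v 0 \<in> {0..int n - 1}" "v (m+1) \<in> {0..int n - 1}" "\<forall>i\<in>{1..m}. v i \<in> {-1, 0, 1}"
    "\<forall>i>m+1. v i = 0" "int n dvd (\<Sum>i\<le>m+1. v i)"
    using assms(3) unfolding zvert_def by auto
  define Ls where "Ls = {p\<in>Piv n m v. real_of_int p < real m / 2}"
  define Rs where "Rs = {p\<in>Piv n m v. real_of_int p \<ge> real m / 2}"
  have sub: "Piv n m v \<subseteq> {-1..int m+1}" by (auto simp: Piv_def)
  have finL: "finite Ls" "finite Rs"
  proof -
    have "Ls \<subseteq> {-1..int m+1}" "Rs \<subseteq> {-1..int m+1}" unfolding Ls_def Rs_def using sub by auto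
    then show "finite Ls" "finite Rs" by (auto intro: finite_subset)
  qed
  have "-1 \<in> Ls" by (simp add: Ls_def Piv_def psum_def)
  then have plL: "p_l n m v \<in> Ls" unfolding p_l_def Ls_def[symmetric]
    using Max_in[OF finL(1)] by blast
  have ps_top: "psum v (int m + 1) = (\<Sum>i\<le>m+1. v i)"
    unfolding psum_def by (intro sum.cong) auto
  have "int m + 1 \<in> Rs" using zv(5) ps_top by (simp add: Rs_def Piv_def)
  then have prR: "p_r n m v \<in> Rs" unfolding p_r_def Rs_def[symmetric]
    using Min_in[OF finL(2)] by blast
  have dl: "int n dvd psum v (p_l n m v)" "real_of_int (p_l n m v) < real m / 2"
    using plL unfolding Ls_def Piv_def by auto
  have dr: "real_of_int (p_r n m v) \<ge> real m / 2"
    using prR unfolding Rs_def by auto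
  have lt: "p_l n m v < p_r n m v" using dl(2) dr by linarith
  have Ic: "I_c n m v = {p_l n m v + 1 .. p_r n m v}" by (simp add: I_c_def)
  have "p_l n m v + 1 \<in> I_c n m v" "p_r n m v \<in> I_c n m v" using lt Ic by auto
  then have ple: "0 \<le> p_l n m v" "p_r n m v \<le> int m" using assms(4) by auto
  define P where "P = nat (p_l n m v)"
  define R where "R = nat (p_r n m v)"
  have PR: "p_l n m v = int P" "p_r n m v = int R" "P < R" "R \<le> m"
    using ple lt unfolding P_def R_def by auto
  define S where "S i = (\<Sum>j\<in>{0..<Suc i}. v j)" for i
  have psumS: "psum v (int i) = S i" for i
    unfolding psum_def S_def by (simp add: nat_add_distrib)
  define c where "c = S P"
  have dc: "int n dvd c" using dl(1) PR(1) psumS unfolding c_def by simp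
  then obtain q where q: "c = int n * q" by (auto elim: dvdE)
  define w where "w i = S i - c" for i
  have Sstep: "S i = S (i - 1) + v i" if i1: "i \<ge> 1" for i
  proof -
    obtain j where "i = Suc j" using i1 by (cases i) auto
    then show ?thesis unfolding S_def by simp
  qed
  have lw: "lip m w" unfolding lip_def
  proof
    fix i assume i: "i \<in> {1..m}"
    then have "w i - w (i - 1) = v i" using Sstep[of i] unfolding w_def by simp
    moreover have "v i \<in> {-1, 0, 1}" using zv(3) i by blast
    ultimately show "\<bar>w i - w (i - 1)\<bar> \<le> 1" by auto
  qed
  have vw: "vert n m w = v"
  proof
    fix i
    show "vert n m w i = v i"
    proof (cases "i = 0")
      case True
      have "w 0 = v 0 - int n * q" unfolding w_def S_def q by simp
      then have "w 0 mod int n = v 0 mod int n" by (simp add: mod_diff_eq[symmetric])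
      also have "\<dots> = v 0" using zv(1) by (simp add: mod_pos_pos_trivial)
      finally show ?thesis using True by (simp add: vert_def)
    next
      case i0: False
      show ?thesis
      proof (cases "i \<le> m")
        case True
        then show ?thesis using i0 Sstep[of i] by (simp add: vert_def w_def)
      next
        case False
        show ?thesis
        proof (cases "i = m + 1")
          case True
          have "S (m+1) = (\<Sum>i\<le>m+1. v i)" unfolding S_def by (intro sum.cong) auto
          then obtain t where t: "S (m+1) = int n * t" using zv(5) by (auto elim: dvdE)
          have "- w m = v (m+1) + int n * (q - t)"
            using Sstep[of "m+1"] t unfolding w_def q by (simp add: algebra_simps)
          then have "(- w m) mod int n = v (m+1) mod int n" by simp
          also have "\<dots> = v (m+1)" using zv(2) by (simp add: mod_pos_pos_trivial)
          finally show ?thesis using True i0 by (simp add: vert_def)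
        next
          case False2: False
          then show ?thesis using False i0 zv(4) by (simp add: vert_def)
        qed
      qed
    qed
  qed
  have wP: "w P = 0" unfolding w_def c_def by simp
  have "(\<Sum>i\<in>I_c n m v. v (nat i)) = (\<Sum>i\<in>int ` {Suc P..R}. v (nat i))"
    using Ic PR by (simp add: image_int_atLeastAtMost add.commute)
  also have "\<dots> = (\<Sum>j\<in>{Suc P..R}. v j)"
    by (subst sum.reindex) (auto simp: inj_on_def)
  finally have s0: "(\<Sum>j\<in>{Suc P..<Suc R}. v j) = 0" using assms(5)
    by (simp add: atLeastLessThanSuc_atLeastAtMost)
  have "S R = S P + (\<Sum>j\<in>{Suc P..<Suc R}. v j)"
    unfolding S_def using sum.atLeastLessThan_concat[of 0 "Suc P" "Suc R" v] PR(3) by simp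
  then have wR: "w R = 0" using s0 unfolding w_def c_def by simp
  define a where "a = (R - P) div 2"
  define b where "b = (R - P) - a"
  have gm: "2*a + (R-P) mod 2 = R - P" unfolding a_def by (rule mult_div_mod_eq)
  have gr: "(R-P) mod 2 = 0 \<or> (R-P) mod 2 = 1" by auto
  have ab: "a + b = R - P" "b = a \<or> b = a + 1" using gm gr unfolding b_def by arith+
  let ?f = "\<lambda>i. \<bar>w i\<bar>"
  have split: "(\<Sum>i\<le>m. ?f i) = (\<Sum>i\<in>{0..<0+P}. ?f i) + (\<Sum>i\<in>{P..<P+(a+1)}. ?f i)
     + (\<Sum>i\<in>{P+(a+1)..<P+(a+1)+b}. ?f i) + (\<Sum>i\<in>{R+1..<R+1+(m-R)}. ?f i)"
  proof -
    have e1: "P+(a+1)+b = R+1" "R+1+(m-R) = m+1" using ab PR by auto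
    have "{..m} = {0..<m+1}" by auto
    then have "(\<Sum>i\<le>m. ?f i) = (\<Sum>i\<in>{0..<m+1}. ?f i)" by simp
    also have "\<dots> = (\<Sum>i\<in>{0..<R+1}. ?f i) + (\<Sum>i\<in>{R+1..<m+1}. ?f i)"
      using sum.atLeastLessThan_concat[of 0 "R+1" "m+1" ?f] PR by simp
    also have "(\<Sum>i\<in>{0..<R+1}. ?f i) = (\<Sum>i\<in>{0..<P+(a+1)}. ?f i) + (\<Sum>i\<in>{P+(a+1)..<R+1}. ?f i)"
      using sum.atLeastLessThan_concat[of 0 "P+(a+1)" "R+1" ?f] e1 by simp
    also have "(\<Sum>i\<in>{0..<P+(a+1)}. ?f i) = (\<Sum>i\<in>{0..<P}. ?f i) + (\<Sum>i\<in>{P..<P+(a+1)}. ?f i)"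
      using sum.atLeastLessThan_concat[of 0 "P" "P+(a+1)" ?f] by simp
    finally show ?thesis using e1 by simp
  qed
  have b1: "2 * (\<Sum>i\<in>{0..<0+P}. ?f i) \<le> int P * (int P + 1)"
  proof -
    have "(\<Sum>i\<in>{0..<0+P}. ?f i) \<le> (\<Sum>i\<in>{0..<0+P}. int P - int i)"
    proof (rule sum_mono)
      fix i assume "i \<in> {0..<0+P}"
      then have "i \<le> P" by simp
      then show "?f i \<le> int P - int i" using lipdist[OF lw, of i P] wP PR by simp
    qed
    moreover have "2 * (\<Sum>i\<in>{0..<0+P}. int P - int i) = int P * (2*int P - 2*int 0 - int P + 1)"
      by (rule H1)
    ultimately show ?thesis by (simp add: algebra_simps)
  qed
  have b2: "2 * (\<Sum>i\<in>{P..<P+(a+1)}. ?f i) \<le> int (a+1) * int a"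
  proof -
    have "(\<Sum>i\<in>{P..<P+(a+1)}. ?f i) \<le> (\<Sum>i\<in>{P..<P+(a+1)}. int i - int P)"
    proof (rule sum_mono)
      fix i assume "i \<in> {P..<P+(a+1)}"
      then have "P \<le> i" "i \<le> m" using ab PR by auto
      then show "?f i \<le> int i - int P" using lipdist[OF lw, of P i] wP by simp
    qed
    moreover have "2 * (\<Sum>i\<in>{P..<P+(a+1)}. int i - int P) = - int (a+1) * (2*int P - 2*int P - int (a+1) + 1)"
      by (rule H2)
    ultimately show ?thesis by (simp add: algebra_simps)
  qed
  have b3: "2 * (\<Sum>i\<in>{P+(a+1)..<P+(a+1)+b}. ?f i) \<le> int b * (int b - 1)"
  proof -
    have "(\<Sum>i\<in>{P+(a+1)..<P+(a+1)+b}. ?f i) \<le> (\<Sum>i\<in>{P+(a+1)..<P+(a+1)+b}. int R - int i)"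
    proof (rule sum_mono)
      fix i assume "i \<in> {P+(a+1)..<P+(a+1)+b}"
      then have "i \<le> R" "R \<le> m" using ab PR by auto
      then show "?f i \<le> int R - int i" using lipdist[OF lw, of i R] wR by simp
    qed
    moreover have "2 * (\<Sum>i\<in>{P+(a+1)..<P+(a+1)+b}. int R - int i)
        = int b * (2*int R - 2*int (P+(a+1)) - int b + 1)"
      by (rule H1)
    moreover have "int R = int P + int a + int b" using ab PR by simp
    ultimately show ?thesis by (simp add: algebra_simps)
  qed
  have b4: "2 * (\<Sum>i\<in>{R+1..<R+1+(m-R)}. ?f i) \<le> int (m-R) * (int (m-R) + 1)"
  proof -
    have "(\<Sum>i\<in>{R+1..<R+1+(m-R)}. ?f i) \<le> (\<Sum>i\<in>{R+1..<R+1+(m-R)}. int i - int R)"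
    proof (rule sum_mono)
      fix i assume "i \<in> {R+1..<R+1+(m-R)}"
      then have "R \<le> i" "i \<le> m" using PR by auto
      then show "?f i \<le> int i - int R" using lipdist[OF lw, of R i] wR by simp
    qed
    moreover have "2 * (\<Sum>i\<in>{R+1..<R+1+(m-R)}. int i - int R)
        = - int (m-R) * (2*int R - 2*int (R+1) - int (m-R) + 1)"
      by (rule H2)
    ultimately show ?thesis by (simp add: algebra_simps)
  qed
  define E where "E = (\<Sum>i\<in>{1..p_l n m v}. i) + (\<Sum>i\<in>{1..int m - p_r n m v}. i)
      + \<lfloor>real (card (I_c n m v)) / 2\<rfloor> * \<lceil>real (card (I_c n m v)) / 2\<rceil>"
  have c1: "2 * (\<Sum>i\<in>{1..p_l n m v}. i) = int P * (int P + 1)" using G[of P] PR by simp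
  have "int m - p_r n m v = int (m - R)" using PR by simp
  then have c2: "2 * (\<Sum>i\<in>{1..int m - p_r n m v}. i) = int (m-R) * (int (m-R) + 1)"
    using G[of "m-R"] by simp
  have "card (I_c n m v) = R - P" using Ic PR by simp
  then have c3: "\<lfloor>real (card (I_c n m v)) / 2\<rfloor> = int a" "\<lceil>real (card (I_c n m v)) / 2\<rceil> = int b"
    using floorceil[of "R - P"] unfolding a_def b_def by simp_all
  have ab2: "int (a+1) * int a + int b * (int b - 1) = 2 * (int a * int b)"
    using ab(2) by (auto simp: algebra_simps)
  have "2 * (\<Sum>i\<le>m. ?f i) \<le> 2 * E"
    unfolding split E_def c3 using b1 b2 b3 b4 c1 c2 ab2 by (simp add: algebra_simps)
  then have SE: "(\<Sum>i\<le>m. ?f i) \<le> E" by simp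
  define N where "N = nat (\<Sum>i\<le>m. ?f i)"
  have NN: "(\<Sum>i\<le>m. ?f i) = int N" unfolding N_def by (simp add: sum_nonneg)
  obtain k where k: "k \<le> N" "(zadj n m ^^ k) (vert n m w) (\<lambda>_. 0)"
    using path[OF assms(1) m1 lw NN] by blast
  have "zdist n m v (\<lambda>_. 0) \<le> enat k"
    unfolding zdist_def using k(2) vw by (intro INF_lower) simp
  also have "enat k \<le> enat (nat E)" using k(1) SE NN by simp
  finally show ?thesis unfolding E_def .
qed

end
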